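(* For every integer $t>1$ and every integer $d$ with $1\le d\le t$, \[ g\Big(1+\frac{d}{t},t\Big)\ge \frac{(2d+1)t+d^2}{(t+d)(2d+1)}. \]
   Context: Let $\mathbb{F}$ be a finite field and $x_1,\dots,x_p$ a basis of $\mathbb{F}^p$. A $[t\times m,p]$ array code is a $t\times m$ array whose entries (cells) are linear combinations of $x_1,\dots,x_p$; its columns are called servers. It has the $k$-PIR property (is a $[t\times m,p]$ $k$-PIR array code) if for every $i\in\{1,\dots,p\}$ there exist $k$ pairwise disjoint sets $S_1,\dots,S_k$ of columns such that for every $j$ the vector $x_i$ lies in the linear span of all entries of the columns in $S_j$. Its PIR rate is $k/m$. For a rational $s>1$ and a positive integer $t$ with $st$ an integer, $g(s,t)$ is the largest PIR rate $k/m$ of a $[t\times m,st]$ $k$-PIR array code (over all finite fields, all $m$ and all $k$). *)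

theory Defs
  imports "HOL-Algebra.Ring" Complex_Main
begin

text \<open>A finite field is represented as a HOL-Algebra field whose carrier is a set of
naturals (every finite field is isomorphic to such a structure).
A cell of a [t x m, p] array code is a linear combination of x_1..x_p, encoded by its
coefficient vector: A r c l is the coefficient of x_(l+1) in cell (row r, column c),
for r < t, c < m, l < p (0-based indices).\<close>

definition recoverable ::
  "nat ring \<Rightarrow> nat \<Rightarrow> nat \<Rightarrow> (nat \<Rightarrow> nat \<Rightarrow> nat \<Rightarrow> nat) \<Rightarrow> nat set \<Rightarrow> nat \<Rightarrow> bool" where
  "recoverable F t p A S i \<longleftrightarrow>
     (\<exists>lam :: nat \<Rightarrow> nat \<Rightarrow> nat.
        (\<forall>r c. lam r c \<in> carrier F) \<and>
        (\<forall>l<p. (\<Oplus>\<^bsub>F\<^esub> rc \<in> {..<t} \<times> S. lam (fst rc) (snd rc) \<otimes>\<^bsub>F\<^esub> A (fst rc) (snd rc) l)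
               = (if l = i then \<one>\<^bsub>F\<^esub> else \<zero>\<^bsub>F\<^esub>)))"

definition is_PIR_array_code ::
  "nat ring \<Rightarrow> nat \<Rightarrow> nat \<Rightarrow> nat \<Rightarrow> nat \<Rightarrow> (nat \<Rightarrow> nat \<Rightarrow> nat \<Rightarrow> nat) \<Rightarrow> bool" where
  "is_PIR_array_code F t m p k A \<longleftrightarrow>
     (\<forall>r<t. \<forall>c<m. \<forall>l<p. A r c l \<in> carrier F) \<and>
     (\<forall>i<p. \<exists>S :: nat \<Rightarrow> nat set.
        (\<forall>j<k. S j \<subseteq> {..<m}) \<and>
        (\<forall>j<k. \<forall>j'<k. j \<noteq> j' \<longrightarrow> S j \<inter> S j' = {}) \<and>
        (\<forall>j<k. recoverable F t p A (S j) i))"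

definition g :: "real \<Rightarrow> nat \<Rightarrow> real" where
  "g s t = Sup {real k / real m | k m p F A.
      field F \<and> finite (carrier F) \<and> m > 0 \<and> real p = s * real t \<and>
      is_PIR_array_code F t m p k A}"

end

theory Submission
  imports Defs
begin


definition GF2 :: "nat ring" where
  "GF2 = \<lparr>carrier = {0,1}, mult = (\<lambda>x y. x*y), one = 1, zero = 0, add = (\<lambda>x y. (x+y) mod 2)\<rparr>"

lemma GF2_simps[simp]: "carrier GF2 = {0,1}" "mult GF2 x y = x*y" "one GF2 = 1" "zero GF2 = 0"
  "add GF2 x y = (x+y) mod 2"
  by (simp_all add: GF2_def)

lemma GF2_abelian: "abelian_group GF2"
  by (rule abelian_groupI) (auto simp: mod_add_left_eq mod_add_right_eq add.assoc add.commute)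

lemma GF2_comm_monoid: "comm_monoid GF2"
  by (rule comm_monoidI) auto

lemma GF2_cring: "cring GF2"
  apply (rule cringI[OF GF2_abelian GF2_comm_monoid])
  by auto

lemma GF2_field: "field GF2"
proof -
  interpret cring GF2 by (rule GF2_cring)
  show ?thesis
    by (rule cring_fieldI2) auto
qed

lemma GF2_finsum:
  assumes "finite A" "\<And>a. a \<in> A \<Longrightarrow> f a \<in> {0::nat,1}"
  shows "finsum GF2 f A = (\<Sum>a\<in>A. f a) mod 2"
  using assms
proof (induction A rule: finite_induct)
  case empty
  then show ?case by (simp add: finsum_def finprod_def)
next
  case (insert x F)
  interpret cring GF2 by (rule GF2_cring)
  have fc: "f \<in> F \<rightarrow> carrier GF2" using insert by auto
  have "finsum GF2 f (insert x F) = add GF2 (f x) (finsum GF2 f F)"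
    by (rule finsum_insert) (use insert in auto)
  also have "\<dots> = (f x + (\<Sum>a\<in>F. f a) mod 2) mod 2" using insert by simp
  also have "\<dots> = (\<Sum>a\<in>insert x F. f a) mod 2" using insert by (simp add: mod_add_right_eq)
  finally show ?case .
qed



lemma PIR_k_le:
  assumes "field F" "is_PIR_array_code F t m p k A" "0 < p"
  shows "k \<le> m"
proof -
  interpret field F by fact
  from assms(2,3) obtain S where S: "\<forall>j<k. S j \<subseteq> {..<m}"
    "\<forall>j<k. \<forall>j'<k. j \<noteq> j' \<longrightarrow> S j \<inter> S j' = {}"
    "\<forall>j<k. recoverable F t p A (S j) 0"
    unfolding is_PIR_array_code_def by blast
  have ne: "S j \<noteq> {}" if "j < k" for j
  proof
    assume e: "S j = {}"
    have "recoverable F t p A (S j) 0" using S(3) that by simp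
    then obtain lam where lam: "\<forall>l<p. (\<Oplus>\<^bsub>F\<^esub> rc \<in> {..<t} \<times> S j. lam (fst rc) (snd rc) \<otimes>\<^bsub>F\<^esub> A (fst rc) (snd rc) l)
               = (if l = 0 then \<one>\<^bsub>F\<^esub> else \<zero>\<^bsub>F\<^esub>)"
      unfolding recoverable_def by blast
    have "(\<Oplus>\<^bsub>F\<^esub> rc \<in> {..<t} \<times> S j. lam (fst rc) (snd rc) \<otimes>\<^bsub>F\<^esub> A (fst rc) (snd rc) 0) = \<one>\<^bsub>F\<^esub>"
      using spec[OF lam, of 0] assms(3) by simp
    with e show False using one_not_zero by simp
  qed
  define f where "f j = (SOME x. x \<in> S j)" for j
  have fS: "f j \<in> S j" if "j < k" for j using ne[OF that] unfolding f_def by (simp add: some_in_eq)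
  have "inj_on f {..<k}"
  proof (rule inj_onI)
    fix j j' assume jj: "j \<in> {..<k}" "j' \<in> {..<k}" "f j = f j'"
    show "j = j'"
    proof (rule ccontr)
      assume "j \<noteq> j'"
      then have "S j \<inter> S j' = {}" using S(2) jj by simp
      moreover have "f j \<in> S j" using fS jj(1) by simp
      moreover have "f j' \<in> S j'" using fS jj(2) by simp
      ultimately show False using jj(3) by (metis disjoint_iff)
    qed
  qed
  moreover have "f ` {..<k} \<subseteq> {..<m}"
  proof
    fix x assume "x \<in> f ` {..<k}"
    then obtain j where "j < k" "x = f j" by auto
    then show "x \<in> {..<m}" using fS[of j] S(1) by auto
  qed
  ultimately show ?thesis using card_inj_on_le[of f "{..<k}" "{..<m}"] by simp
qed

definition arec :: "nat \<Rightarrow> ('a \<Rightarrow> nat set set) \<Rightarrow> 'a set \<Rightarrow> nat \<Rightarrow> bool" where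
  "arec p C S i \<longleftrightarrow> (\<exists>Q. finite Q \<and> Q \<subseteq> Sigma S C \<and>
     (\<forall>l<p. (\<Sum>z\<in>Q. if l \<in> snd z then 1 else 0::nat) mod 2 = (if l = i then 1 else 0)))"

lemma transfer:
  assumes fin: "finite T" and CT: "\<forall>a\<in>T. finite (C a) \<and> card (C a) \<le> t"
    and fam: "\<forall>i<p. \<exists>FF. FF \<subseteq> Pow T \<and> finite FF \<and> card FF \<ge> k \<and>
        (\<forall>S\<in>FF. \<forall>S'\<in>FF. S \<noteq> S' \<longrightarrow> S \<inter> S' = {}) \<and> (\<forall>S\<in>FF. arec p C S i)"
  shows "\<exists>A. is_PIR_array_code GF2 t (card T) p k A"
proof -
  define m where "m = card T"
  obtain e where e: "bij_betw e {0..<m} T" using ex_bij_betw_nat_finite[OF fin] m_def by blast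
  define xs where "xs a = (SOME xs. set xs = C a \<and> distinct xs)" for a
  have xs: "set (xs a) = C a \<and> distinct (xs a)" if "a \<in> T" for a
  proof -
    have "\<exists>xs. set xs = C a \<and> distinct xs" using CT that finite_distinct_list by blast
    then show ?thesis unfolding xs_def by (rule someI_ex)
  qed
  have xslen: "length (xs a) \<le> t" if "a \<in> T" for a
    using xs[OF that] CT that distinct_card by fastforce
  define A where "A r c l = (if r < length (xs (e c)) \<and> l \<in> xs (e c) ! r then 1 else 0::nat)" for r c l
  have "is_PIR_array_code GF2 t m p k A"
    unfolding is_PIR_array_code_def
  proof (intro conjI allI impI)
    fix r c l show "A r c l \<in> carrier GF2" by (simp add: A_def)
  next
    fix i assume i: "i < p"
    from fam[rule_format, OF i] obtain FF where FFa: "FF \<subseteq> Pow T \<and> finite FF \<and> card FF \<ge> k \<and>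
        (\<forall>S\<in>FF. \<forall>S'\<in>FF. S \<noteq> S' \<longrightarrow> S \<inter> S' = {}) \<and> (\<forall>S\<in>FF. arec p C S i)" ..
    note FF = FFa[THEN conjunct1] FFa[THEN conjunct2, THEN conjunct1]
       FFa[THEN conjunct2, THEN conjunct2, THEN conjunct1]
       FFa[THEN conjunct2, THEN conjunct2, THEN conjunct2, THEN conjunct1]
       FFa[THEN conjunct2, THEN conjunct2, THEN conjunct2, THEN conjunct2]
    obtain GG where GG: "GG \<subseteq> FF" "card GG = k" "finite GG" by (rule obtain_subset_with_card_n[OF FF(3)])
    from ex_bij_betw_nat_finite[OF GG(3), unfolded GG(2)] obtain F where F: "bij_betw F {0..<k} GG" ..
    define S where "S j = {c \<in> {..<m}. e c \<in> F j}" for j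
    have FjG: "F j \<in> GG" if "j < k" for j using bij_betwE[OF F] that by simp
    show "\<exists>S. (\<forall>j<k. S j \<subseteq> {..<m}) \<and>
           (\<forall>j<k. \<forall>j'<k. j \<noteq> j' \<longrightarrow> S j \<inter> S j' = {}) \<and> (\<forall>j<k. recoverable GF2 t p A (S j) i)"
    proof (intro exI[of _ S] conjI allI impI)
      fix j assume "j < k" then show "S j \<subseteq> {..<m}" unfolding S_def by blast
    next
      fix j j' assume jj: "j < k" "j' < k" "j \<noteq> j'"
      then have "F j \<noteq> F j'" using F unfolding bij_betw_def inj_on_def by auto
      moreover have "F j \<in> FF" "F j' \<in> FF" using GG(1) FjG jj(1,2) by auto
      ultimately have "F j \<inter> F j' = {}" using FF(4) by simp
      then show "S j \<inter> S j' = {}" unfolding S_def by blast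
    next
      fix j assume j: "j < k"
      have FjT: "F j \<subseteq> T" using FjG[OF j] GG(1) FF(1) by blast
      have "arec p C (F j) i" using FF(5) FjG[OF j] GG(1) by auto
      then obtain Q where Q: "finite Q" "Q \<subseteq> Sigma (F j) C"
        "\<forall>l<p. (\<Sum>z\<in>Q. if l \<in> snd z then 1 else 0::nat) mod 2 = (if l = i then 1 else 0)"
        unfolding arec_def by blast
      define lam where "lam r c = (if r < length (xs (e c)) \<and> (e c, xs (e c) ! r) \<in> Q then 1 else 0::nat)" for r c
      define P where "P = {rc \<in> {..<t} \<times> S j. lam (fst rc) (snd rc) = 1}"
      define \<phi> where "\<phi> rc = (e (snd rc), xs (e (snd rc)) ! fst rc)" for rc :: "nat \<times> nat"
      have ecT: "e c \<in> T" if "c \<in> S j" for c using that FjT unfolding S_def by blast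
      have bij: "bij_betw \<phi> P Q"
        unfolding bij_betw_def
      proof
        show "inj_on \<phi> P"
        proof (rule inj_onI)
          fix x y assume xy: "x \<in> P" "y \<in> P" "\<phi> x = \<phi> y"
          obtain r c r' c' where xy': "x = (r,c)" "y = (r',c')" by fastforce
          have ee: "e c = e c'" using xy(3) xy' by (simp add: \<phi>_def)
          have "c \<in> S j" "c' \<in> S j" using xy(1,2) xy' unfolding P_def by auto
          then have cm: "c < m" "c' < m" unfolding S_def by auto
          have cc: "c = c'" using inj_onD[OF bij_betw_imp_inj_on[OF e] ee] cm by simp
          have l1: "lam r c = 1" using xy(1) xy'(1) unfolding P_def by simp
          have l2: "lam r' c = 1" using xy(2) xy'(2) cc unfolding P_def by simp
          have rl: "r < length (xs (e c))" "r' < length (xs (e c))"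
            using l1 l2 unfolding lam_def by (meson zero_neq_one)+
          have xe: "xs (e c) ! r = xs (e c) ! r'" using xy(3) xy' cc by (simp add: \<phi>_def)
          from \<open>c \<in> S j\<close> have "distinct (xs (e c))" using xs[OF ecT] by blast
          then have "r = r'" using nth_eq_iff_index_eq[OF _ rl] xe by simp
          then show "x = y" using xy' cc by simp
        qed
      next
        show "\<phi> ` P = Q"
        proof
          show "\<phi> ` P \<subseteq> Q" unfolding P_def lam_def \<phi>_def by (auto split: if_splits)
        next
          show "Q \<subseteq> \<phi> ` P"
          proof
            fix z assume z: "z \<in> Q"
            obtain a v where av: "z = (a,v)" by (cases z)
            have a: "a \<in> F j" "v \<in> C a" using Q(2) z av by auto
            have aT: "a \<in> T" using a FjT by blast
            define c where "c = inv_into {0..<m} e a"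
            have c: "c < m" "e c = a" using e aT unfolding c_def bij_betw_def
              by (auto intro: inv_into_into f_inv_into_f)
            have cS: "c \<in> S j" using c a unfolding S_def by auto
            from a xs[OF aT] obtain r where r: "r < length (xs a)" "xs a ! r = v"
              by (metis in_set_conv_nth)
            have "r < t" using r xslen[OF aT] by simp
            then have "(r,c) \<in> P" using r c cS z av unfolding P_def lam_def by auto
            moreover have "\<phi> (r,c) = z" using r c av \<phi>_def by simp
            ultimately show "z \<in> \<phi> ` P" by blast
          qed
        qed
      qed
      have finS: "finite ({..<t} \<times> S j)" unfolding S_def by auto
      show "recoverable GF2 t p A (S j) i"
        unfolding recoverable_def
      proof (intro exI[of _ lam] conjI allI impI)
        fix r c show "lam r c \<in> carrier GF2" by (simp add: lam_def)
      next
        fix l assume l: "l < p"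
        have "finsum GF2 (\<lambda>rc. lam (fst rc) (snd rc) \<otimes>\<^bsub>GF2\<^esub> A (fst rc) (snd rc) l) ({..<t} \<times> S j)
            = (\<Sum>rc\<in>{..<t} \<times> S j. lam (fst rc) (snd rc) * A (fst rc) (snd rc) l) mod 2"
          unfolding GF2_simps(2) by (rule GF2_finsum[OF finS]) (auto simp: lam_def A_def)
        also have "(\<Sum>rc\<in>{..<t} \<times> S j. lam (fst rc) (snd rc) * A (fst rc) (snd rc) l)
            = (\<Sum>rc\<in>P. (\<lambda>z. if l \<in> snd z then 1 else 0::nat) (\<phi> rc))"
        proof -
          have "(\<Sum>rc\<in>{..<t} \<times> S j. lam (fst rc) (snd rc) * A (fst rc) (snd rc) l)
              = (\<Sum>rc\<in>{..<t} \<times> S j. if rc \<in> P then (\<lambda>z. if l \<in> snd z then 1 else 0::nat) (\<phi> rc) else 0)"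
            by (rule sum.cong) (auto simp: P_def lam_def A_def \<phi>_def)
          also have "\<dots> = (\<Sum>rc\<in>P. (\<lambda>z. if l \<in> snd z then 1 else 0::nat) (\<phi> rc))"
            using finS by (simp add: sum.If_cases P_def Int_def)
          finally show ?thesis .
        qed
        also have "\<dots> = (\<Sum>z\<in>Q. if l \<in> snd z then 1 else 0::nat)"
          by (rule sum.reindex_bij_betw[OF bij])
        finally show "finsum GF2 (\<lambda>rc. lam (fst rc) (snd rc) \<otimes>\<^bsub>GF2\<^esub> A (fst rc) (snd rc) l) ({..<t} \<times> S j)
            = (if l = i then \<one>\<^bsub>GF2\<^esub> else \<zero>\<^bsub>GF2\<^esub>)" using Q(3) l by simp
      qed
    qed
  qed
  then show ?thesis unfolding m_def by blast
qed



lemma modinj_aux: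
  fixes n :: nat
  assumes "(s+q) mod n = (s+q') mod n" "q < n" "q' < n" "q \<le> q'"
  shows "q = q'"
proof (rule ccontr)
  assume ne: "q \<noteq> q'"
  have "n dvd (s+q') - (s+q)" using mod_eq_dvd_iff_nat[of "s+q" "s+q'" n] assms(1,4) by simp
  then have "n dvd q' - q" by simp
  moreover have "0 < q' - q" using ne assms(4) by simp
  ultimately have "n \<le> q' - q" by (rule dvd_imp_le)
  then show False using assms(3) by simp
qed

lemma modinj:
  fixes n :: nat
  assumes "(s+q) mod n = (s+q') mod n" "q < n" "q' < n"
  shows "q = q'"
  using modinj_aux[OF assms] modinj_aux[OF assms(1)[symmetric] assms(3,2)] by linarith

lemma sum_ind_image:
  assumes "inj_on f R" "finite R"
  shows "(\<Sum>x\<in>R. if l = f x then 1 else 0::nat) = (if l \<in> f ` R then 1 else 0)"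
proof -
  have "(\<Sum>x\<in>R. if l = f x then 1 else 0::nat) = (\<Sum>y\<in>f ` R. if l = y then 1 else 0::nat)"
    using sum.reindex[OF assms(1), of "\<lambda>y. if l = y then 1 else 0::nat"] by simp
  also have "\<dots> = (if l \<in> f ` R then 1 else 0)" using assms(2) by (simp add: sum.delta)
  finally show ?thesis .
qed

context
  fixes t d :: nat
  assumes d1: "1 \<le> d" and dt: "d \<le> t"
begin

definition "nn = t + d"
definition "ww = 2 * d"
definition "pp s q = (s + q) mod nn"
definition om :: "bool \<times> nat \<times> nat set \<Rightarrow> nat set" where
  "om a = pp (fst (snd a)) ` snd (snd a)"
definition TT :: "(bool \<times> nat \<times> nat set) set" where
  "TT = {a. fst (snd a) < nn \<and> snd (snd a) \<subseteq> {..<ww} \<and> card (snd (snd a)) = (if fst a then d+1 else d)}"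
definition CC :: "bool \<times> nat \<times> nat set \<Rightarrow> nat set set" where
  "CC a = (\<lambda>x. {x}) ` ({..<nn} - om a) \<union> (if fst a then {om a} else {})"
definition pr :: "nat \<Rightarrow> nat set \<Rightarrow> nat \<Rightarrow> (bool \<times> nat \<times> nat set) set" where
  "pr s D q = {(False,s,D), (True,s,({..<ww}-D) \<union> {q})}"
definition PP :: "nat \<Rightarrow> (nat \<times> nat set \<times> nat) set" where
  "PP i = {(s,D,q). s < nn \<and> D \<subseteq> {..<ww} \<and> card D = d \<and> q \<in> D \<and> pp s q = i}"

lemma ww_le: "ww \<le> nn" "0 < nn" "d + 1 \<le> ww" "0 < ww"
  using d1 dt unfolding ww_def nn_def by auto

lemma pp_lt: "pp s q < nn"
  unfolding pp_def using ww_le(2) by simp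

lemma pp_inj: "pp s q = pp s q' \<Longrightarrow> q < ww \<Longrightarrow> q' < ww \<Longrightarrow> q = q'"
  unfolding pp_def using modinj ww_le(1) by (meson less_le_trans)

lemma pp_inj_on: "inj_on (pp s) {..<ww}"
  by (rule inj_onI) (use pp_inj in auto)

lemma pp_inj_s: "pp s q = pp s' q \<Longrightarrow> s < nn \<Longrightarrow> s' < nn \<Longrightarrow> s = s'"
  unfolding pp_def using modinj[of q s n s' for n] by (metis add.commute)

lemma finite_TT: "finite TT"
proof -
  have "TT \<subseteq> UNIV \<times> {..<nn} \<times> Pow {..<ww}" unfolding TT_def by auto
  moreover have "finite (UNIV \<times> {..<nn} \<times> Pow {..<ww} :: (bool \<times> nat \<times> nat set) set)" by simp
  ultimately show ?thesis by (rule finite_subset)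
qed

lemma om_card: "snd (snd a) \<subseteq> {..<ww} \<Longrightarrow> card (om a) = card (snd (snd a))"
  unfolding om_def by (rule card_image) (meson inj_on_subset pp_inj_on)

lemma om_sub: "om a \<subseteq> {..<nn}"
  unfolding om_def using pp_lt by auto

lemma CC_card: "a \<in> TT \<Longrightarrow> finite (CC a) \<and> card (CC a) \<le> t"
proof -
  assume a: "a \<in> TT"
  have D: "snd (snd a) \<subseteq> {..<ww}" using a unfolding TT_def by auto
  have fin: "finite (CC a)" unfolding CC_def by simp
  have c1: "card ((\<lambda>x. {x}) ` ({..<nn} - om a)) = nn - card (om a)"
    using card_image[of "\<lambda>x. {x}" "{..<nn} - om a"] om_sub[of a]
    by (simp add: card_Diff_subset finite_subset)
  have "card (CC a) \<le> card ((\<lambda>x. {x}) ` ({..<nn} - om a)) + card (if fst a then {om a} else {})"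
    unfolding CC_def by (rule card_Un_le)
  also have "\<dots> \<le> t"
  proof (cases "fst a")
    case True
    then have "card (snd (snd a)) = d + 1" using a unfolding TT_def by auto
    then show ?thesis using True c1 om_card[OF D] ww_le unfolding nn_def by simp
  next
    case False
    then have "card (snd (snd a)) = d" using a unfolding TT_def by auto
    then show ?thesis using False c1 om_card[OF D] unfolding nn_def by simp
  qed
  finally show ?thesis using fin by simp
qed

lemma sing_arec: "a \<in> TT \<Longrightarrow> i \<notin> om a \<Longrightarrow> i < nn \<Longrightarrow> arec nn CC {a} i"
  unfolding arec_def
proof (intro exI[of _ "{(a,{i})}"] conjI allI impI)
  assume "a \<in> TT" "i \<notin> om a" "i < nn"
  then show "{(a, {i})} \<subseteq> Sigma {a} CC" unfolding CC_def by auto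
qed auto

lemma PP_D: "(s,D,q) \<in> PP i \<Longrightarrow> s < nn \<and> D \<subseteq> {..<ww} \<and> card D = d \<and> q \<in> D \<and> pp s q = i"
  unfolding PP_def by simp

lemma E_card: "D \<subseteq> {..<ww} \<Longrightarrow> card D = d \<Longrightarrow> q \<in> D \<Longrightarrow> card (({..<ww} - D) \<union> {q}) = d + 1"
proof -
  assume a: "D \<subseteq> {..<ww}" "card D = d" "q \<in> D"
  have "card ({..<ww} - D) = d" using a card_Diff_subset[of D "{..<ww}"] finite_subset[OF a(1)]
    unfolding ww_def by simp
  then show ?thesis using a by simp
qed

lemma pr_sub: "(s,D,q) \<in> PP i \<Longrightarrow> pr s D q \<subseteq> TT"
proof -
  assume "(s,D,q) \<in> PP i"
  note P = PP_D[OF this]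
  have "card (({..<ww} - D) \<union> {q}) = d + 1" using E_card P by blast
  moreover have "({..<ww} - D) \<union> {q} \<subseteq> {..<ww}" using P by auto
  ultimately show ?thesis using P unfolding pr_def TT_def by auto
qed

lemma pr_om: "(s,D,q) \<in> PP i \<Longrightarrow> x \<in> pr s D q \<Longrightarrow> i \<in> om x"
proof -
  assume a: "(s,D,q) \<in> PP i" "x \<in> pr s D q"
  note P = PP_D[OF a(1)]
  from a(2) consider "x = (False,s,D)" | "x = (True,s,({..<ww}-D) \<union> {q})" unfolding pr_def by blast
  then show ?thesis
  proof cases
    case 1 then show ?thesis using P unfolding om_def by auto
  next
    case 2 then show ?thesis using P unfolding om_def by auto
  qed
qed

lemma pr_eq:
  assumes "(s,D,q) \<in> PP i" "(s',D',q') \<in> PP i" "pr s D q \<inter> pr s' D' q' \<noteq> {}"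
  shows "(s,D,q) = (s',D',q')"
proof -
  note P = PP_D[OF assms(1)] and P' = PP_D[OF assms(2)]
  from assms(3) consider "(s,D) = (s',D')" | "s = s'" "({..<ww}-D) \<union> {q} = ({..<ww}-D') \<union> {q'}"
    unfolding pr_def by auto
  then show ?thesis
  proof cases
    case 1
    then have "pp s q = pp s q'" "q < ww" "q' < ww" using P P' by auto
    then have "q = q'" by (rule pp_inj)
    then show ?thesis using 1 by simp
  next
    case 2
    have "pp s q = pp s q'" "q < ww" "q' < ww" using P P' 2(1) by auto
    then have qq: "q = q'" by (rule pp_inj)
    have "D = {..<ww} - ((({..<ww}-D) \<union> {q}) - {q})" using P by auto
    also have "\<dots> = {..<ww} - ((({..<ww}-D') \<union> {q'}) - {q'})" using 2(2) qq by simp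
    also have "\<dots> = D'" using P' by auto
    finally show ?thesis using 2(1) qq by simp
  qed
qed

lemma pr_arec: "(s,D,q) \<in> PP i \<Longrightarrow> arec nn CC (pr s D q) i"
proof -
  assume a: "(s,D,q) \<in> PP i"
  note P = PP_D[OF a]
  define R where "R = {..<ww} - D"
  define E where "E = R \<union> {q}"
  define U where "U = (False,s,D)"
  define X where "X = (True,s,E)"
  define Q where "Q = (\<lambda>x. (U, {pp s x})) ` R \<union> {(X, pp s ` E)}"
  have omX: "om X = pp s ` E" unfolding om_def X_def by simp
  have Rsub: "R \<subseteq> {..<ww}" unfolding R_def by auto
  have finR: "finite R" unfolding R_def by simp
  have injR: "inj_on (pp s) R" using pp_inj_on Rsub inj_on_subset by blast
  have Qsub: "Q \<subseteq> Sigma (pr s D q) CC"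
  proof
    fix z assume "z \<in> Q"
    then consider x where "x \<in> R" "z = (U, {pp s x})" | "z = (X, pp s ` E)" unfolding Q_def by blast
    then show "z \<in> Sigma (pr s D q) CC"
    proof cases
      case 1
      have "pp s x \<notin> pp s ` D"
      proof
        assume "pp s x \<in> pp s ` D"
        then obtain y where "y \<in> D" "pp s x = pp s y" by blast
        moreover have "x < ww" using 1 Rsub by auto
        moreover have "y < ww" using \<open>y \<in> D\<close> P by auto
        ultimately have "x = y" using pp_inj by blast
        then show False using 1 \<open>y \<in> D\<close> unfolding R_def by simp
      qed
      then have "{pp s x} \<in> CC U" unfolding CC_def om_def U_def using pp_lt by auto
      moreover have "U \<in> pr s D q" unfolding pr_def U_def by simp
      ultimately show ?thesis using 1 by simp
    next
      case 2
      have "pp s ` E \<in> CC X" unfolding CC_def using omX unfolding X_def by simp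
      moreover have "X \<in> pr s D q" unfolding pr_def X_def E_def R_def by simp
      ultimately show ?thesis using 2 by simp
    qed
  qed
  have UX: "U \<noteq> X" unfolding U_def X_def by simp
  show ?thesis unfolding arec_def
  proof (intro exI[of _ Q] conjI allI impI)
    show "finite Q" unfolding Q_def using finR by simp
    show "Q \<subseteq> Sigma (pr s D q) CC" by (rule Qsub)
  next
    fix l assume l: "l < nn"
    have disj: "(\<lambda>x. (U, {pp s x})) ` R \<inter> {(X, pp s ` E)} = {}" using UX by auto
    have injU: "inj_on (\<lambda>x. (U, {pp s x})) R" using injR unfolding inj_on_def by auto
    have "(\<Sum>z\<in>Q. if l \<in> snd z then 1 else 0::nat)
        = (\<Sum>z\<in>(\<lambda>x. (U, {pp s x})) ` R. if l \<in> snd z then 1 else 0::nat)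
          + (if l \<in> pp s ` E then 1 else 0)"
      unfolding Q_def using sum.union_disjoint[OF _ _ disj, of "\<lambda>z. if l \<in> snd z then 1 else 0::nat"] finR
      by simp
    also have "(\<Sum>z\<in>(\<lambda>x. (U, {pp s x})) ` R. if l \<in> snd z then 1 else 0::nat)
        = (\<Sum>x\<in>R. if l = pp s x then 1 else 0::nat)"
      using sum.reindex[OF injU, of "\<lambda>z. if l \<in> snd z then 1 else 0::nat"] by simp
    also have "\<dots> = (if l \<in> pp s ` R then 1 else 0)" by (rule sum_ind_image[OF injR finR])
    finally have S: "(\<Sum>z\<in>Q. if l \<in> snd z then 1 else 0::nat)
        = (if l \<in> pp s ` R then 1 else 0) + (if l \<in> pp s ` E then 1 else 0)" .
    have iR: "i \<notin> pp s ` R"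
    proof
      assume "i \<in> pp s ` R"
      then obtain x where "x \<in> R" "pp s x = i" by blast
      moreover have "x < ww" using \<open>x \<in> R\<close> Rsub by auto
      ultimately have "x = q" using pp_inj P by auto
      then show False using \<open>x \<in> R\<close> P unfolding R_def by simp
    qed
    have Eim: "pp s ` E = pp s ` R \<union> {i}" unfolding E_def using P by auto
    show "(\<Sum>z\<in>Q. if l \<in> snd z then 1 else 0::nat) mod 2 = (if l = i then 1 else 0)"
      unfolding S Eim using iR by auto
  qed
qed

definition FAM :: "nat \<Rightarrow> (bool \<times> nat \<times> nat set) set set" where
  "FAM i = (\<lambda>a. {a}) ` {a\<in>TT. i \<notin> om a} \<union> (\<lambda>(s,D,q). pr s D q) ` PP i"

lemma finite_PP: "finite (PP i)"
proof -
  have "PP i \<subseteq> {..<nn} \<times> Pow {..<ww} \<times> {..<ww}" unfolding PP_def by auto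
  then show ?thesis by (rule finite_subset) simp
qed

lemma FAM_cases:
  assumes "X \<in> FAM i"
  shows "(\<exists>x. x \<in> TT \<and> i \<notin> om x \<and> X = {x}) \<or> (\<exists>s D q. (s,D,q) \<in> PP i \<and> X = pr s D q)"
proof -
  from assms consider (a) "X \<in> (\<lambda>a. {a}) ` {a\<in>TT. i \<notin> om a}" | (b) "X \<in> (\<lambda>(s,D,q). pr s D q) ` PP i"
    unfolding FAM_def by blast
  then show ?thesis
  proof cases
    case a then show ?thesis by blast
  next
    case b
    then obtain z where z: "z \<in> PP i" "X = (\<lambda>(s,D,q). pr s D q) z" by blast
    obtain s D q where "z = (s,D,q)" by (cases z)
    then have "(s,D,q) \<in> PP i \<and> X = pr s D q" using z by simp
    then show ?thesis by blast
  qed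
qed

lemma FAM_sub: "FAM i \<subseteq> Pow TT"
proof
  fix X assume "X \<in> FAM i"
  from FAM_cases[OF this] show "X \<in> Pow TT"
  proof (elim disjE exE conjE)
    fix x assume "x \<in> TT" "X = {x}" then show ?thesis by simp
  next
    fix s D q assume "(s,D,q) \<in> PP i" "X = pr s D q" then show ?thesis using pr_sub by simp
  qed
qed

lemma FAM_fin: "finite (FAM i)"
  unfolding FAM_def using finite_TT finite_PP by simp

lemma FAM_arec: "i < nn \<Longrightarrow> S \<in> FAM i \<Longrightarrow> arec nn CC S i"
  using FAM_cases[of S i] sing_arec pr_arec by blast

lemma FAM_disj: "S \<in> FAM i \<Longrightarrow> S' \<in> FAM i \<Longrightarrow> S \<noteq> S' \<Longrightarrow> S \<inter> S' = {}"
proof -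
  assume a: "S \<in> FAM i" "S' \<in> FAM i" "S \<noteq> S'"
  note C = FAM_cases
  show ?thesis
  proof (rule ccontr)
    assume ne: "S \<inter> S' \<noteq> {}"
    from C[OF a(1)] C[OF a(2)] show False
    proof (elim disjE exE conjE)
      fix x y assume "S = {x}" "S' = {y}"
      then show False using a(3) ne by auto
    next
      fix x s D q assume "i \<notin> om x" "S = {x}" "(s,D,q) \<in> PP i" "S' = pr s D q"
      then show False using ne pr_om by blast
    next
      fix x s D q assume "i \<notin> om x" "S' = {x}" "(s,D,q) \<in> PP i" "S = pr s D q"
      then show False using ne pr_om by blast
    next
      fix s D q s' D' q' assume "(s,D,q) \<in> PP i" "S = pr s D q" "(s',D',q') \<in> PP i" "S' = pr s' D' q'"
      then show False using ne a(3) pr_eq by blast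
    qed
  qed
qed

lemma card_TT: "card TT = nn * (ww choose d) + nn * (ww choose (d+1))"
proof -
  define U where "U = (\<lambda>(s,D). (False,s,D)) ` ({..<nn} \<times> {D. D \<subseteq> {..<ww} \<and> card D = d})"
  define X where "X = (\<lambda>(s,D). (True,s,D)) ` ({..<nn} \<times> {D. D \<subseteq> {..<ww} \<and> card D = d+1})"
  have "TT = U \<union> X"
  proof
    show "TT \<subseteq> U \<union> X"
    proof
      fix a assume "a \<in> TT"
      then obtain b s D where a: "a = (b,s,D)" "s < nn" "D \<subseteq> {..<ww}" "card D = (if b then d+1 else d)"
        unfolding TT_def by (cases a) auto
      show "a \<in> U \<union> X"
      proof (cases b)
        case True then have "a \<in> X" using a unfolding X_def by auto
        then show ?thesis by simp
      next
        case False then have "a \<in> U" using a unfolding U_def by auto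
        then show ?thesis by simp
      qed
    qed
  next
    show "U \<union> X \<subseteq> TT" unfolding U_def X_def TT_def by auto
  qed
  moreover have "U \<inter> X = {}" unfolding U_def X_def by auto
  moreover have "card U = nn * (ww choose d)"
    unfolding U_def by (subst card_image) (auto simp: inj_on_def card_cartesian_product n_subsets)
  moreover have "card X = nn * (ww choose (d+1))"
    unfolding X_def by (subst card_image) (auto simp: inj_on_def card_cartesian_product n_subsets)
  moreover have "finite U" "finite X" unfolding U_def X_def by auto
  ultimately show ?thesis by (simp add: card_Un_disjoint)
qed

lemma XO_bound: "card {a\<in>TT. fst a \<and> i \<in> om a} \<le> ww * ((ww - 1) choose d)"
proof -
  define Xq where "Xq q = {a\<in>TT. fst a \<and> q \<in> snd (snd a) \<and> pp (fst (snd a)) q = i}" for q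
  have sub: "{a\<in>TT. fst a \<and> i \<in> om a} \<subseteq> (\<Union>q\<in>{..<ww}. Xq q)"
  proof
    fix a assume a: "a \<in> {a\<in>TT. fst a \<and> i \<in> om a}"
    then obtain q where q: "q \<in> snd (snd a)" "pp (fst (snd a)) q = i" unfolding om_def by auto
    have "snd (snd a) \<subseteq> {..<ww}" using a unfolding TT_def by auto
    then have "q < ww" using q by auto
    then show "a \<in> (\<Union>q\<in>{..<ww}. Xq q)" using a q unfolding Xq_def by auto
  qed
  have bnd: "card (Xq q) \<le> (ww - 1) choose d" if q: "q < ww" for q
  proof -
    define Es where "Es = {E. E \<subseteq> {..<ww} \<and> card E = d+1 \<and> q \<in> E}"
    have inj: "inj_on (\<lambda>a. snd (snd a)) (Xq q)"
    proof (rule inj_onI)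
      fix a b assume ab: "a \<in> Xq q" "b \<in> Xq q" "snd (snd a) = snd (snd b)"
      have "pp (fst (snd a)) q = pp (fst (snd b)) q" "fst (snd a) < nn" "fst (snd b) < nn"
        using ab unfolding Xq_def TT_def by auto
      then have "fst (snd a) = fst (snd b)" by (rule pp_inj_s)
      moreover have "fst a = fst b" using ab unfolding Xq_def by auto
      ultimately show "a = b" using ab(3) by (simp add: prod_eq_iff)
    qed
    have im: "(\<lambda>a. snd (snd a)) ` Xq q \<subseteq> Es" unfolding Xq_def Es_def TT_def by auto
    have finEs: "finite Es" unfolding Es_def by (rule finite_subset[of _ "Pow {..<ww}"]) auto
    have "card (Xq q) \<le> card Es"
      using card_inj_on_le[OF inj im finEs] .
    also have "Es \<subseteq> insert q ` {E. E \<subseteq> {..<ww} - {q} \<and> card E = d}"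
    proof
      fix E assume E: "E \<in> Es"
      then have "E = insert q (E - {q})" unfolding Es_def by auto
      moreover have "E - {q} \<subseteq> {..<ww} - {q}" using E unfolding Es_def by auto
      moreover have "card (E - {q}) = d" using E unfolding Es_def
        by (simp add: finite_subset[of E "{..<ww}"])
      ultimately show "E \<in> insert q ` {E. E \<subseteq> {..<ww} - {q} \<and> card E = d}" by blast
    qed
    then have "card Es \<le> card (insert q ` {E. E \<subseteq> {..<ww} - {q} \<and> card E = d})"
      by (rule card_mono[rotated]) simp
    also have "\<dots> \<le> card {E. E \<subseteq> {..<ww} - {q} \<and> card E = d}" by (rule card_image_le) simp
    also have "\<dots> = (ww - 1) choose d" using q by (simp add: n_subsets)
    finally show ?thesis .
  qed
  have "card {a\<in>TT. fst a \<and> i \<in> om a} \<le> card (\<Union>q\<in>{..<ww}. Xq q)"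
    by (rule card_mono[OF _ sub]) (simp add: Xq_def finite_TT)
  also have "\<dots> \<le> (\<Sum>q\<in>{..<ww}. card (Xq q))" by (rule card_UN_le) simp
  also have "\<dots> \<le> ww * ((ww - 1) choose d)"
    using sum_bounded_above[of "{..<ww}" "\<lambda>q. card (Xq q)" "(ww - 1) choose d"] bnd by simp
  finally show ?thesis .
qed

lemma FAM_card: "card TT - ww * ((ww - 1) choose d) \<le> card (FAM i)"
proof -
  define G where "G = {a\<in>TT. i \<notin> om a}"
  define UO where "UO = {a\<in>TT. \<not> fst a \<and> i \<in> om a}"
  define XO where "XO = {a\<in>TT. fst a \<and> i \<in> om a}"
  define Sg where "Sg = (\<lambda>a. {a}) ` G"
  define Pr where "Pr = (\<lambda>(s,D,q). pr s D q) ` PP i"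
  have FAM: "FAM i = Sg \<union> Pr" unfolding FAM_def Sg_def Pr_def G_def by simp
  have finG: "finite G" "finite UO" "finite XO" unfolding G_def UO_def XO_def using finite_TT by auto
  have TTs: "TT = G \<union> UO \<union> XO" unfolding G_def UO_def XO_def by auto
  have c1: "card (G \<union> UO \<union> XO) = card (G \<union> UO) + card XO"
    by (rule card_Un_disjoint) (use finG in \<open>auto simp: G_def UO_def XO_def\<close>)
  have c2: "card (G \<union> UO) = card G + card UO"
    by (rule card_Un_disjoint) (use finG in \<open>auto simp: G_def UO_def XO_def\<close>)
  have cTT: "card TT = card G + card UO + card XO" using TTs c1 c2 by simp
  have cSg: "card Sg = card G" unfolding Sg_def by (rule card_image) (simp add: inj_on_def)
  have injP: "inj_on (\<lambda>(s,D,q). pr s D q) (PP i)"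
  proof (rule inj_onI)
    fix x y assume xy: "x \<in> PP i" "y \<in> PP i" "(\<lambda>(s,D,q). pr s D q) x = (\<lambda>(s,D,q). pr s D q) y"
    obtain s D q where x: "x = (s,D,q)" by (cases x)
    obtain s' D' q' where y: "y = (s',D',q')" by (cases y)
    have "pr s D q \<inter> pr s' D' q' \<noteq> {}" using xy(3) x y unfolding pr_def by auto
    then show "x = y" using pr_eq xy(1,2) x y by blast
  qed
  have cPr: "card Pr = card (PP i)" unfolding Pr_def by (rule card_image[OF injP])
  have "UO \<subseteq> (\<lambda>(s,D,q). (False,s,D)) ` PP i"
  proof
    fix a assume a: "a \<in> UO"
    then obtain s D where aa: "a = (False,s,D)" unfolding UO_def by (cases a) auto
    have P: "s < nn" "D \<subseteq> {..<ww}" "card D = d" using a aa unfolding UO_def TT_def by auto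
    from a aa obtain q where q: "q \<in> D" "pp s q = i" unfolding UO_def om_def by auto
    have "(s,D,q) \<in> PP i" using P q unfolding PP_def by simp
    then show "a \<in> (\<lambda>(s,D,q). (False,s,D)) ` PP i" using aa by force
  qed
  then have "card UO \<le> card ((\<lambda>(s,D,q). (False,s,D)) ` PP i)"
    by (rule card_mono[rotated]) (simp add: finite_PP)
  also have "\<dots> \<le> card (PP i)" by (rule card_image_le[OF finite_PP])
  finally have cUO: "card UO \<le> card (PP i)" .
  have disj: "Sg \<inter> Pr = {}"
  proof (rule ccontr)
    assume "Sg \<inter> Pr \<noteq> {}"
    then obtain a s D q where eq: "{a} = pr s D q" unfolding Sg_def Pr_def by auto
    have "(False,s,D) \<in> {a}" "(True,s,({..<ww}-D) \<union> {q}) \<in> {a}"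
      unfolding eq pr_def by simp_all
    then have "(False,s,D) = (True,s,({..<ww}-D) \<union> {q})" by simp
    then show False by simp
  qed
  have fSg: "finite Sg" unfolding Sg_def using finG by simp
  have fPr: "finite Pr" unfolding Pr_def using finite_PP by simp
  have "card (FAM i) = card Sg + card Pr"
    unfolding FAM by (rule card_Un_disjoint[OF fSg fPr disj])
  then have "card TT - card XO \<le> card (FAM i)" using cTT cSg cPr cUO by linarith
  moreover have "card XO \<le> ww * ((ww - 1) choose d)" unfolding XO_def by (rule XO_bound)
  ultimately show ?thesis by linarith
qed

lemma main_code: "\<exists>A. is_PIR_array_code GF2 t (card TT) nn (card TT - ww * ((ww - 1) choose d)) A"
proof (rule transfer[OF finite_TT])
  show "\<forall>a\<in>TT. finite (CC a) \<and> card (CC a) \<le> t" using CC_card by blast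
  show "\<forall>i<nn. \<exists>FF. FF \<subseteq> Pow TT \<and> finite FF \<and> card TT - ww * ((ww - 1) choose d) \<le> card FF \<and>
        (\<forall>S\<in>FF. \<forall>S'\<in>FF. S \<noteq> S' \<longrightarrow> S \<inter> S' = {}) \<and> (\<forall>S\<in>FF. arec nn CC S i)"
  proof (intro allI impI)
    fix i assume i: "i < nn"
    show "\<exists>FF. FF \<subseteq> Pow TT \<and> finite FF \<and> card TT - ww * ((ww - 1) choose d) \<le> card FF \<and>
        (\<forall>S\<in>FF. \<forall>S'\<in>FF. S \<noteq> S' \<longrightarrow> S \<inter> S' = {}) \<and> (\<forall>S\<in>FF. arec nn CC S i)"
    proof (intro exI[of _ "FAM i"] conjI ballI impI)
      show "FAM i \<subseteq> Pow TT" by (rule FAM_sub)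
      show "finite (FAM i)" by (rule FAM_fin)
      show "card TT - ww * ((ww - 1) choose d) \<le> card (FAM i)" by (rule FAM_card)
    next
      fix S S' assume "S \<in> FAM i" "S' \<in> FAM i" "S \<noteq> S'"
      then show "S \<inter> S' = {}" by (rule FAM_disj)
    next
      fix S assume "S \<in> FAM i"
      then show "arec nn CC S i" by (rule FAM_arec[OF i])
    qed
  qed
qed

lemma rate_eq:
  "real (card TT - ww * ((ww - 1) choose d)) / real (card TT)
     = ((2 * real d + 1) * real t + real d ^ 2) / ((real t + real d) * (2 * real d + 1))"
  and card_pos: "0 < card TT"
proof -
  define C0 where "C0 = (2*d) choose d"
  define C1 where "C1 = (2*d) choose (d+1)"
  define B where "B = (2*d - 1) choose d"
  have e1: "(d+1) * C1 = 2*d * B"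
    using Suc_times_binomial[of d "2*d - 1"] d1 unfolding C1_def B_def
    by (simp add: Suc_diff_1)
  have e2: "(d+1) * C1 = d * C0"
    using Suc_times_binomial_add[of d "d - 1"] d1 unfolding C1_def C0_def
    by (simp add: Suc_diff_1 mult_2)
  have C1pos: "0 < C1" unfolding C1_def using d1 by simp
  have cT: "card TT = (t+d) * C0 + (t+d) * C1" using card_TT unfolding C0_def C1_def nn_def ww_def by simp
  have L: "ww * ((ww - 1) choose d) = (d+1) * C1" using e1 unfolding ww_def B_def by simp
  have "(d+1) * C1 \<le> (t+d) * C1" by (rule mult_right_mono) (use d1 dt in simp_all)
  then have Lle: "(d+1) * C1 \<le> card TT" using cT by linarith
  show "0 < card TT" using cT C1pos d1 by simp
  have r1: "real (card TT - ww * ((ww - 1) choose d)) = real (card TT) - real ((d+1) * C1)"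
    using L Lle by simp
  have e1r: "real (d+1) * real C1 = real d * real C0" using e2 by (metis of_nat_mult)
  have cTr: "real (card TT) = (real t + real d) * (real C0 + real C1)" using cT by (simp add: algebra_simps)
  have pos1: "0 < (real t + real d) * (2 * real d + 1)" using d1 by simp
  have pos2: "0 < real (card TT)" using \<open>0 < card TT\<close> by simp
  have key: "(real (card TT) - real ((d+1) * C1)) * ((real t + real d) * (2 * real d + 1))
      = ((2 * real d + 1) * real t + real d ^ 2) * real (card TT)"
  proof -
    have "(real (card TT) - real ((d+1) * C1)) * ((real t + real d) * (2 * real d + 1))
      - ((2 * real d + 1) * real t + real d ^ 2) * real (card TT)
      = (real d * real C0 - real (d+1) * real C1) * ((real d + 1) * (real d + real t))"
      unfolding cTr by (simp add: algebra_simps power2_eq_square)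
    then show ?thesis using e1r by simp
  qed
  show "real (card TT - ww * ((ww - 1) choose d)) / real (card TT)
     = ((2 * real d + 1) * real t + real d ^ 2) / ((real t + real d) * (2 * real d + 1))"
    unfolding r1 by (subst frac_eq_eq) (use pos1 pos2 key in auto)
qed

end

theorem theorem6:
  fixes t d :: nat
  assumes "t > 1" and "1 \<le> d" and "d \<le> t"
  shows "g (1 + real d / real t) t \<ge>
           ((2 * real d + 1) * real t + real d ^ 2) / ((real t + real d) * (2 * real d + 1))"
proof -
  have d1: "1 \<le> d" and dt: "d \<le> t" using assms by auto
  have tpos: "0 < real t" using assms by simp
  define k where "k = card (TT t d) - ww d * (ww d - 1 choose d)"
  define m where "m = card (TT t d)"
  obtain A where A: "is_PIR_array_code GF2 t m (nn t d) k A"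
    using main_code[OF d1 dt] unfolding k_def m_def by blast
  define X where "X = {real k / real m | k m p F A. field F \<and> finite (carrier F) \<and> m > 0 \<and>
      real p = (1 + real d / real t) * real t \<and> is_PIR_array_code F t m p k A}"
  have gX: "g (1 + real d / real t) t = Sup X" unfolding g_def X_def by simp
  have pn: "real (nn t d) = (1 + real d / real t) * real t"
    using tpos by (simp add: nn_def[OF d1 dt] field_simps)
  have mem: "real k / real m \<in> X"
    unfolding X_def using GF2_field A card_pos[OF d1 dt] pn unfolding m_def by fastforce
  have bdd: "bdd_above X"
  proof (rule bdd_aboveI[of _ 1])
    fix x assume "x \<in> X"
    then obtain k' m' p F A' where x: "x = real k' / real m'" "field F" "m' > 0"
      "real p = (1 + real d / real t) * real t" "is_PIR_array_code F t m' p k' A'"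
      unfolding X_def by blast
    have "(1 + real d / real t) * real t = real t + real d" using tpos by (simp add: field_simps)
    then have "real p = real t + real d" using x(4) by simp
    then have "0 < p" using assms by linarith
    then have "k' \<le> m'" using PIR_k_le[OF x(2) x(5)] by blast
    then show "x \<le> 1" using x(1,3) by simp
  qed
  have "real k / real m \<le> Sup X" by (rule cSup_upper[OF mem bdd])
  moreover have "real k / real m = ((2 * real d + 1) * real t + real d ^ 2) / ((real t + real d) * (2 * real d + 1))"
    unfolding k_def m_def by (rule rate_eq[OF d1 dt])
  ultimately show ?thesis using gX by simp
qed

end
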